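(* Let $R>0$ and $\rho,\lambda_1,\lambda_2>0$, and let $H,G_1,G_2$ be independent exponential random variables with rates $\rho,\lambda_1,\lambda_2$ respectively (representing $h^2,g_1^2,g_2^2$). For $\Delta>0$ let (logarithms base $2$, $[x]^+=\max\{x,0\}$) $$R_{\mathrm{QMF}}(\Delta)=\Big[\min\Big\{\log\Big(1+\frac{H}{1+\Delta}+G_2\Big),\ \log(1+G_1+G_2)-\log\frac{1+\Delta}{\Delta}\Big\}\Big]^+,$$ and for each value of $H$ let $\Delta^*(H)>0$ be a quantization level minimizing the conditional outage probability $\Pr\{R>R_{\mathrm{QMF}}(\Delta)\mid H\}$ over $\Delta>0$. Define \begin{align*} P_{\mathrm{DF}}&=\Pr\{R<\log(1+H),\ R>\log(1+G_1+G_2)\}+\Pr\{R\ge\log(1+H),\ R>\log(1+G_2)\},\\ P_{\mathrm{QMF}}&=\Pr\{R>R_{\mathrm{QMF}}(\Delta^*(H))\},\\ P_{\mathrm{HYB}}&=\Pr\{R<\log(1+H),\ R>\log(1+G_1+G_2)\}+\Pr\{R\ge\log(1+H),\ R>R_{\mathrm{QMF}}(\Delta^*(H))\}. \end{align*} Then $P_{\mathrm{HYB}}<P_{\mathrm{QMF}}$ and $P_{\mathrm{HYB}}<P_{\mathrm{DF}}$.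
   Context: This concerns the full-duplex Gaussian single-relay channel ($Y_r=\mathsf hX+Z_r$, $Y=\mathsf g_1X_r+\mathsf g_2X+Z$, unit powers and noise) under independent Rayleigh fading ($|\mathsf h|^2,|\mathsf g_1|^2,|\mathsf g_2|^2$ exponential), where the relay knows only its incoming channel (receiver CSI). $P_{\mathrm{DF}}$ is the outage probability at rate $R$ of decode-and-forward (relay decodes if $R<\log(1+h^2)$, otherwise direct transmission), $P_{\mathrm{QMF}}$ that of quantize-map-and-forward with the receiver-CSI-optimal Gaussian quantizer $\Delta^*(h)$, and $P_{\mathrm{HYB}}$ that of the hybrid scheme in which the relay decodes and forwards when $R<\log(1+h^2)$ and otherwise performs QMF with distortion $\Delta^*(h)$. *)

theory Defs
  imports "HOL-Probability.Probability"
begin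

definition exp_law :: "real \<Rightarrow> real measure" where
  "exp_law r = density lborel (exponential_density r)"

definition chan_law :: "real \<Rightarrow> real \<Rightarrow> real \<Rightarrow> (real \<times> real \<times> real) measure" where
  "chan_law rho l1 l2 = exp_law rho \<Otimes>\<^sub>M (exp_law l1 \<Otimes>\<^sub>M exp_law l2)"

definition R_QMF :: "real \<Rightarrow> real \<Rightarrow> real \<Rightarrow> real \<Rightarrow> real" where
  "R_QMF h g1 g2 D = max 0 (min (log 2 (1 + h / (1 + D) + g2))
                              (log 2 (1 + g1 + g2) - log 2 ((1 + D) / D)))"

text \<open>Conditional outage probability of QMF given H = h (G1, G2 independent of H).\<close>
definition cond_outage :: "real \<Rightarrow> real \<Rightarrow> real \<Rightarrow> real \<Rightarrow> real \<Rightarrow> real" where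
  "cond_outage l1 l2 R h D =
     measure (exp_law l1 \<Otimes>\<^sub>M exp_law l2) {(g1, g2). R > R_QMF h g1 g2 D}"

definition P_DF :: "real \<Rightarrow> real \<Rightarrow> real \<Rightarrow> real \<Rightarrow> real" where
  "P_DF rho l1 l2 R =
     measure (chan_law rho l1 l2) {(h, g1, g2). R < log 2 (1 + h) \<and> R > log 2 (1 + g1 + g2)}
   + measure (chan_law rho l1 l2) {(h, g1, g2). R \<ge> log 2 (1 + h) \<and> R > log 2 (1 + g2)}"

definition P_QMF :: "real \<Rightarrow> real \<Rightarrow> real \<Rightarrow> real \<Rightarrow> (real \<Rightarrow> real) \<Rightarrow> real" where
  "P_QMF rho l1 l2 R Dstar =
     measure (chan_law rho l1 l2) {(h, g1, g2). R > R_QMF h g1 g2 (Dstar h)}"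

definition P_HYB :: "real \<Rightarrow> real \<Rightarrow> real \<Rightarrow> real \<Rightarrow> (real \<Rightarrow> real) \<Rightarrow> real" where
  "P_HYB rho l1 l2 R Dstar =
     measure (chan_law rho l1 l2) {(h, g1, g2). R < log 2 (1 + h) \<and> R > log 2 (1 + g1 + g2)}
   + measure (chan_law rho l1 l2) {(h, g1, g2). R \<ge> log 2 (1 + h) \<and> R > R_QMF h g1 g2 (Dstar h)}"

end

theory Submission imports Defs begin
lemma sets_exp_law[simp, measurable_cong]: "sets (exp_law r) = sets borel"
  by (simp add: exp_law_def)
lemma space_exp_law[simp]: "space (exp_law r) = UNIV"
  by (simp add: exp_law_def)
lemma exp_law_single: "emeasure (exp_law r) {t} = 0"
  unfolding exp_law_def
  apply (subst emeasure_density) apply simp apply simp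
  apply (subst nn_integral_0_iff_AE) apply simp
  using AE_lborel_singleton[of t] by eventually_elim auto
lemma R_QMF_meas[measurable]: 
  assumes [measurable]: "f \<in> borel_measurable M" "g \<in> borel_measurable M" "k \<in> borel_measurable M" "d \<in> borel_measurable M"
  shows "(\<lambda>x. R_QMF (f x) (g x) (k x) (d x)) \<in> borel_measurable M"
  unfolding R_QMF_def by measurable
lemma measure_times':
  assumes "finite_measure M" "finite_measure N" "A \<in> sets N" "B \<in> sets M"
  shows "measure (N \<Otimes>\<^sub>M M) (A \<times> B) = measure N A * measure M B"
proof -
  interpret M: finite_measure M by fact
  interpret N: finite_measure N by fact
  show ?thesis
    unfolding measure_def using assms
    by (simp add: M.emeasure_pair_measure_Times enn2real_mult)
qed
lemma prob_exp_law: "r > 0 \<Longrightarrow> prob_space (exp_law r)"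
  unfolding exp_law_def by (rule prob_space_exponential_density)
lemma F_le:
  assumes "r > 0" "0 \<le> t" shows "measure (exp_law r) {..t} = 1 - exp (- t * r)"
proof -
  interpret prob_space "exp_law r" using prob_exp_law[OF assms(1)] .
  have "distributed (exp_law r) lborel (\<lambda>x. x) (exponential_density r)"
    unfolding distributed_def exp_law_def
    using assms by (auto simp: distr_id2 exponential_density_nonneg)
  from exponential_distributedD_le[OF this assms(2) assms(1)]
  show ?thesis by (simp add: atMost_def)
qed
lemma F_neg:
  assumes "r > 0" "t \<le> 0" shows "measure (exp_law r) {..t} = 0"
proof -
  interpret prob_space "exp_law r" using prob_exp_law[OF assms(1)] .
  have "measure (exp_law r) {..t} \<le> measure (exp_law r) {..0}"
    using assms by (intro finite_measure_mono) auto
  also have "\<dots> = 0" using F_le[OF assms(1), of 0] by simp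
  finally show ?thesis using measure_nonneg[of "exp_law r" "{..t}"] by linarith
qed
lemma F_lt:
  assumes "r > 0" "0 \<le> t" shows "measure (exp_law r) {..<t} = 1 - exp (- t * r)"
proof -
  interpret prob_space "exp_law r" using prob_exp_law[OF assms(1)] .
  have "{..<t} = {..t} - {t}" by auto
  hence "measure (exp_law r) {..<t} = measure (exp_law r) {..t} - measure (exp_law r) {t}"
    by (simp add: finite_measure_Diff)
  also have "measure (exp_law r) {t} = 0" using exp_law_single[of r t] by (simp add: measure_def)
  finally show ?thesis using F_le[OF assms] by simp
qed
lemma F_ioc:
  assumes "r > 0" "0 \<le> s" "s \<le> t" shows "measure (exp_law r) {s<..t} = exp (- s * r) - exp (- t * r)"
proof -
  interpret prob_space "exp_law r" using prob_exp_law[OF assms(1)] .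
  have "{s<..t} = {..t} - {..s}" by auto
  hence "measure (exp_law r) {s<..t} = measure (exp_law r) {..t} - measure (exp_law r) {..s}"
    using assms by (simp add: finite_measure_Diff)
  thus ?thesis using F_le[OF assms(1)] assms by simp
qed
lemma F_gt:
  assumes "r > 0" "0 \<le> s" shows "measure (exp_law r) {s<..} = exp (- s * r)"
proof -
  interpret prob_space "exp_law r" using prob_exp_law[OF assms(1)] .
  have "{s<..} = space (exp_law r) - {..s}" by auto
  have "measure (exp_law r) {s<..} = measure (exp_law r) (space (exp_law r)) - measure (exp_law r) {..s}"
    unfolding \<open>{s<..} = space (exp_law r) - {..s}\<close> by (rule finite_measure_Diff) auto
  hence "measure (exp_law r) {s<..} = 1 - measure (exp_law r) {..s}" by (simp add: prob_space del: space_exp_law)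
  thus ?thesis using F_le[OF assms(1)] assms by simp
qed
lemma F_ioo:
  assumes "r > 0" "0 \<le> t" shows "measure (exp_law r) {-1<..<t} = 1 - exp (- t * r)"
proof -
  interpret prob_space "exp_law r" using prob_exp_law[OF assms(1)] .
  have "{-1<..<t} = {..<t} - {..-1}" using assms by auto
  have "measure (exp_law r) {-1<..<t} = measure (exp_law r) {..<t} - measure (exp_law r) {..-1}"
    unfolding \<open>{-1<..<t} = {..<t} - {..-1}\<close> by (rule finite_measure_Diff) (use assms in auto)
  thus ?thesis using F_lt[OF assms] F_neg[OF assms(1), of "-1"] by simp
qed

lemma fubini_measure:
  assumes "prob_space N" "prob_space M" "X \<in> sets (N \<Otimes>\<^sub>M M)"
  shows "measure (N \<Otimes>\<^sub>M M) X = (\<integral>x. measure M (Pair x -` X) \<partial>N)"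
    and "integrable N (\<lambda>x. measure M (Pair x -` X))"
proof -
  interpret M: prob_space M by fact
  interpret N: prob_space N by fact
  have meas: "(\<lambda>x. measure M (Pair x -` X)) \<in> borel_measurable N"
    unfolding measure_def using M.measurable_emeasure_Pair[OF assms(3)] by measurable
  show int: "integrable N (\<lambda>x. measure M (Pair x -` X))"
    by (rule N.integrable_const_bound[where B=1]) (auto simp: meas)
  have "emeasure (N \<Otimes>\<^sub>M M) X = (\<integral>\<^sup>+x. emeasure M (Pair x -` X) \<partial>N)"
    using M.emeasure_pair_measure_alt[OF assms(3)] .
  also have "\<dots> = (\<integral>\<^sup>+x. ennreal (measure M (Pair x -` X)) \<partial>N)"
    by (simp add: M.emeasure_eq_measure)
  also have "\<dots> = ennreal (\<integral>x. measure M (Pair x -` X) \<partial>N)"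
    by (rule nn_integral_eq_integral[OF int]) auto
  finally show "measure (N \<Otimes>\<^sub>M M) X = (\<integral>x. measure M (Pair x -` X) \<partial>N)"
    by (simp add: measure_def)
qed
lemma outage_incl:
  fixes R h D g1 g2 :: real
  assumes "R > 0" "h > 0" "D > 0" "g1 \<ge> 0" "g2 \<ge> 0" "R > R_QMF h g1 g2 D"
  shows "g2 \<le> 2 powr R - 1 - h/(1+D) \<or>
         (g1 \<le> h/(1+D) + 2 powr R / D \<and> 2 powr R - 1 - h/(1+D) < g2 \<and> g2 \<le> 2 powr R - 1) \<or>
         (g1 \<le> 2 powr R / D \<and> 2 powr R - 1 < g2 \<and> g2 \<le> 2 powr R - 1 + 2 powr R / D)"
proof -
  define c where "c = 2 powr R"
  have c: "c > 0" unfolding c_def by simp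
  have hd: "h/(1+D) \<ge> 0" using assms by simp
  have "R > log 2 (1 + h / (1 + D) + g2) \<or> R > log 2 (1 + g1 + g2) - log 2 ((1 + D) / D)"
    using assms(6) unfolding R_QMF_def by auto
  moreover
  { assume "R > log 2 (1 + h / (1 + D) + g2)"
    hence "1 + h / (1 + D) + g2 < c" unfolding c_def
      using log_less_iff[of 2 "1 + h/(1+D) + g2" R] hd assms by auto
    hence "g2 < c - 1 - h/(1+D)" by simp }
  moreover
  { assume a2: "R > log 2 (1 + g1 + g2) - log 2 ((1 + D) / D)"
    have "log 2 (c * ((1 + D) / D)) = R + log 2 ((1 + D) / D)"
      unfolding c_def using assms by (subst log_mult) auto
    hence "log 2 (1 + g1 + g2) < log 2 (c * ((1 + D) / D))" using a2 by simp
    hence "1 + g1 + g2 < c * ((1 + D) / D)"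
      using assms c by (subst (asm) log_less_cancel_iff) auto
    also have "c * ((1 + D) / D) = c + c / D" using assms by (simp add: field_simps)
    finally have "g1 + g2 < c - 1 + c / D" by simp }
  ultimately show ?thesis unfolding c_def[symmetric] using assms
    by (smt (verit) divide_nonneg_nonneg)
qed

lemma real_ineq:
  fixes l1 l2 h c D :: real
  assumes l1: "l1 > 0" and l2: "l2 > 0" and h: "h > 0" and c: "c > 1"
    and D: "D = 1 + 2*l1*(h+c) + 4*l1*c^2/h + h/(c-1)"
  shows "exp (- (h/(1+D) + c/D) * l1) * (exp ((h/(1+D)) * l2) - 1)
         > (1 - exp (- (c/D) * l1)) * (1 - exp (- (c/D) * l2))"
proof -
  define \<delta> where "\<delta> = h/(1+D)"
  define \<eta> where "\<eta> = c/D"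
  have t1: "2*l1*(h+c) \<ge> 0" "4*l1*c^2/h \<ge> 0" "h/(c-1) \<ge> 0" using l1 h c by auto
  have D1: "D \<ge> 1" using D t1 by linarith
  have Dpos: "D > 0" using D1 by simp
  have "D > 4*l1*c^2/h" using D t1 by linarith
  hence hD: "h * D > 4*l1*c^2" using h by (simp add: field_simps)
  have D2: "D \<ge> 2*l1*(h+c)" using D t1 by linarith
  have dpos: "\<delta> > 0" unfolding \<delta>_def using h Dpos by simp
  have epos: "\<eta> > 0" unfolding \<eta>_def using c Dpos by simp
  have dle: "\<delta> \<le> h/D" unfolding \<delta>_def using h Dpos by (intro divide_left_mono) auto
  have dge: "\<delta> \<ge> h/(2*D)" unfolding \<delta>_def using h Dpos D1 by (intro divide_left_mono) auto
  have "l1*(\<delta>+\<eta>) \<le> l1*((h+c)/D)"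
    using dle l1 unfolding \<eta>_def by (intro mult_left_mono) (auto simp: add_divide_distrib)
  also have "\<dots> \<le> 1/2" using D2 Dpos l1 by (simp add: field_simps)
  finally have s1: "l1*(\<delta>+\<eta>) \<le> 1/2" .
  have p: "exp (- (\<delta>+\<eta>) * l1) \<ge> 1/2"
    using exp_ge_add_one_self[of "- (\<delta>+\<eta>) * l1"] s1 by (simp add: algebra_simps)
  have u: "exp (\<delta> * l2) - 1 \<ge> \<delta> * l2" using exp_ge_add_one_self[of "\<delta> * l2"] by linarith
  have w: "1 - exp (- \<eta> * l1) \<le> \<eta> * l1" "1 - exp (- \<eta> * l1) \<ge> 0"
    using exp_ge_add_one_self[of "- \<eta> * l1"] epos l1 by auto
  have v: "1 - exp (- \<eta> * l2) \<le> \<eta> * l2" "1 - exp (- \<eta> * l2) \<ge> 0"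
    using exp_ge_add_one_self[of "- \<eta> * l2"] epos l2 by auto
  have "(1 - exp (- \<eta> * l1)) * (1 - exp (- \<eta> * l2)) \<le> (\<eta> * l1) * (\<eta> * l2)"
    using w v by (intro mult_mono) auto
  also have "(\<eta> * l1) * (\<eta> * l2) = l2 * (l1 * c^2 / D^2)" unfolding \<eta>_def by (simp add: power2_eq_square)
  also have "\<dots> < l2 * (h/(2*D) / 2)"
  proof -
    have "l1 * c^2 / D^2 < h/(4*D)" using hD Dpos by (simp add: field_simps power2_eq_square)
    from mult_strict_left_mono[OF this l2] show ?thesis by simp
  qed
  also have "\<dots> \<le> l2 * (\<delta> / 2)" using mult_left_mono[OF dge, of l2] l2 by (simp add: mult.commute)
  also have "\<dots> = (1/2) * (\<delta> * l2)" by simp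
  also have "\<dots> \<le> exp (- (\<delta>+\<eta>) * l1) * (exp (\<delta> * l2) - 1)"
    using p u dpos l2 by (intro mult_mono) auto
  finally show ?thesis unfolding \<delta>_def \<eta>_def by simp
qed

lemma qset_meas: "{(g1, g2). R > log 2 (1 + g2)} \<in> sets (exp_law l1 \<Otimes>\<^sub>M exp_law l2)"
proof -
  have "{(g1, g2). R > log 2 (1 + g2)} = {x \<in> space (exp_law l1 \<Otimes>\<^sub>M exp_law l2). R > log 2 (1 + snd x)}"
    by (auto simp: space_pair_measure)
  also have "\<dots> \<in> sets (exp_law l1 \<Otimes>\<^sub>M exp_law l2)" by measurable
  finally show ?thesis .
qed

lemma key:
  fixes l1 l2 R h :: real
  assumes l1: "l1 > 0" and l2: "l2 > 0" and R: "R > 0" and h: "h > 0"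
  shows "\<exists>D>0. cond_outage l1 l2 R h D < measure (exp_law l1 \<Otimes>\<^sub>M exp_law l2) {(g1, g2). R > log 2 (1 + g2)}"
proof -
  define c where "c = 2 powr R"
  have c1: "c > 1" unfolding c_def using R by simp
  define a where "a = c - 1"
  have a: "a > 0" using c1 a_def by simp
  define D where "D = 1 + 2*l1*(h+c) + 4*l1*c^2/h + h/(c-1)"
  define \<delta> where "\<delta> = h/(1+D)"
  define \<eta> where "\<eta> = c/D"
  have t1: "2*l1*(h+c) \<ge> 0" "4*l1*c^2/h \<ge> 0" "h/(c-1) \<ge> 0" using l1 h c1 by auto
  have D1: "D \<ge> 1" using D_def t1 by linarith
  have Dpos: "D > 0" using D1 by simp
  have dpos: "\<delta> > 0" unfolding \<delta>_def using h Dpos by simp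
  have epos: "\<eta> > 0" unfolding \<eta>_def using c1 Dpos by simp
  have dle: "\<delta> \<le> h/D" unfolding \<delta>_def using h Dpos by (intro divide_left_mono) auto
  have "D \<ge> h/a" unfolding a_def using D_def t1 by linarith
  hence "h/D \<le> a" using Dpos a h by (simp add: field_simps)
  hence da: "\<delta> \<le> a" using dle by simp
  interpret M1: prob_space "exp_law l1" using prob_exp_law l1 .
  interpret M2: prob_space "exp_law l2" using prob_exp_law l2 .
  let ?Q = "exp_law l1 \<Otimes>\<^sub>M exp_law l2"
  interpret Q: prob_space ?Q by (intro prob_space_pair) unfold_locales
  have fm: "finite_measure (exp_law l1)" "finite_measure (exp_law l2)" 
    by unfold_locales
  define E1 :: "(real \<times> real) set" where "E1 = UNIV \<times> {..a-\<delta>}"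
  define E2 :: "(real \<times> real) set" where "E2 = {..\<delta>+\<eta>} \<times> {a-\<delta><..a}"
  define E3 :: "(real \<times> real) set" where "E3 = {..\<eta>} \<times> {a<..a+\<eta>}"
  define N1 :: "(real \<times> real) set" where "N1 = {..<0} \<times> UNIV"
  define N2 :: "(real \<times> real) set" where "N2 = UNIV \<times> {..<0}"
  have sets: "E1 \<in> sets ?Q" "E2 \<in> sets ?Q" "E3 \<in> sets ?Q" "N1 \<in> sets ?Q" "N2 \<in> sets ?Q"
    unfolding E1_def E2_def E3_def N1_def N2_def by auto
  have incl: "{(g1, g2). R > R_QMF h g1 g2 D} \<subseteq> E1 \<union> E2 \<union> E3 \<union> N1 \<union> N2"
  proof
    fix x assume "x \<in> {(g1, g2). R > R_QMF h g1 g2 D}"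
    then obtain g1 g2 where x: "x = (g1, g2)" and o: "R > R_QMF h g1 g2 D" by auto
    show "x \<in> E1 \<union> E2 \<union> E3 \<union> N1 \<union> N2"
    proof (cases "g1 \<ge> 0 \<and> g2 \<ge> 0")
      case True
      from outage_incl[OF R h Dpos True[THEN conjunct1] True[THEN conjunct2] o]
      show ?thesis unfolding x E1_def E2_def E3_def a_def c_def \<delta>_def \<eta>_def by auto
    next
      case False thus ?thesis unfolding x N1_def N2_def by auto
    qed
  qed
  have "cond_outage l1 l2 R h D \<le> measure ?Q (E1 \<union> E2 \<union> E3 \<union> N1 \<union> N2)"
    unfolding cond_outage_def using incl sets by (intro Q.finite_measure_mono) auto
  also have "\<dots> \<le> measure ?Q E1 + measure ?Q E2 + measure ?Q E3 + measure ?Q N1 + measure ?Q N2"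
  proof -
    have sub: "\<And>A B. A \<in> sets ?Q \<Longrightarrow> B \<in> sets ?Q \<Longrightarrow> measure ?Q (A \<union> B) \<le> measure ?Q A + measure ?Q B"
      by (rule measure_subadditive) (auto simp: Q.emeasure_finite)
    have "measure ?Q (E1 \<union> E2) \<le> measure ?Q E1 + measure ?Q E2" using sets by (intro sub) auto
    moreover have "measure ?Q (E1 \<union> E2 \<union> E3) \<le> measure ?Q (E1 \<union> E2) + measure ?Q E3" using sets by (intro sub) auto
    moreover have "measure ?Q (E1 \<union> E2 \<union> E3 \<union> N1) \<le> measure ?Q (E1 \<union> E2 \<union> E3) + measure ?Q N1" using sets by (intro sub) auto
    moreover have "measure ?Q (E1 \<union> E2 \<union> E3 \<union> N1 \<union> N2) \<le> measure ?Q (E1 \<union> E2 \<union> E3 \<union> N1) + measure ?Q N2" using sets by (intro sub) auto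
    ultimately show ?thesis by linarith
  qed
  also have "measure ?Q N1 = 0" unfolding N1_def
    by (simp add: measure_times'[OF fm(2,1)] F_lt[OF l1, of 0])
  also have "measure ?Q N2 = 0" unfolding N2_def
    by (simp add: measure_times'[OF fm(2,1)] F_lt[OF l2, of 0])
  also have "measure ?Q E1 = 1 - exp (- (a-\<delta>) * l2)" unfolding E1_def
    using da by (simp add: measure_times'[OF fm(2,1)] F_le[OF l2] M1.prob_space[simplified])
  also have "measure ?Q E2 = (1 - exp (- (\<delta>+\<eta>) * l1)) * (exp (- (a-\<delta>) * l2) - exp (- a * l2))"
    unfolding E2_def using da dpos epos
    by (simp add: measure_times'[OF fm(2,1)] F_le[OF l1] F_ioc[OF l2])
  also have "measure ?Q E3 = (1 - exp (- \<eta> * l1)) * (exp (- a * l2) - exp (- (a+\<eta>) * l2))"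
    unfolding E3_def using a epos
    by (simp add: measure_times'[OF fm(2,1)] F_le[OF l1] F_ioc[OF l2])
  also have "1 - exp (- (a-\<delta>) * l2) + (1 - exp (- (\<delta>+\<eta>) * l1)) * (exp (- (a-\<delta>) * l2) - exp (- a * l2))
      + (1 - exp (- \<eta> * l1)) * (exp (- a * l2) - exp (- (a+\<eta>) * l2)) + 0 + 0 < 1 - exp (- a * l2)"
  proof -
    define X where "X = exp (- a * l2)"
    have X: "X > 0" unfolding X_def by simp
    have e1: "exp (- (a-\<delta>) * l2) = X * exp (\<delta> * l2)" unfolding X_def
      by (simp add: exp_add[symmetric] algebra_simps)
    have e2: "exp (- (a+\<eta>) * l2) = X * exp (- \<eta> * l2)" unfolding X_def
      by (simp add: exp_add[symmetric] algebra_simps)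
    have ri: "exp (- (\<delta>+\<eta>) * l1) * (exp (\<delta> * l2) - 1) > (1 - exp (- \<eta> * l1)) * (1 - exp (- \<eta> * l2))"
      unfolding \<delta>_def \<eta>_def using real_ineq[OF l1 l2 h c1 D_def] by simp
    have "X * ((1 - exp (- \<eta> * l1)) * (1 - exp (- \<eta> * l2))) < X * (exp (- (\<delta>+\<eta>) * l1) * (exp (\<delta> * l2) - 1))"
      using ri X by simp
    thus ?thesis unfolding e1 e2 X_def[symmetric] by (simp add: algebra_simps)
  qed
  also have "1 - exp (- a * l2) = measure ?Q (UNIV \<times> {-1<..<a})"
    using a by (simp add: measure_times'[OF fm(2,1)] F_ioo[OF l2] M1.prob_space[simplified])
  also have "\<dots> \<le> measure ?Q {(g1, g2). R > log 2 (1 + g2)}"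
  proof (rule Q.finite_measure_mono[OF _ qset_meas], safe)
    fix g1 g2 :: real assume "g2 \<in> {-1<..<a}"
    hence "0 < 1 + g2" "1 + g2 < 2 powr R" unfolding a_def c_def by auto
    thus "R > log 2 (1 + g2)" by (simp add: log_less_iff)
  qed
  finally show ?thesis using Dpos by blast
qed

lemma qmf_lt:
  assumes "R > 0" "log 2 (1 + g1 + g2) - log 2 ((1 + D) / D) < R"
  shows "R_QMF h g1 g2 D < R"
  using assms unfolding R_QMF_def by auto

lemma fin_exp: "r > 0 \<Longrightarrow> finite_measure (exp_law r)"
  using prob_exp_law[of r] by (simp add: prob_space_def)

lemma log_ratio_pos: "D > 0 \<Longrightarrow> log 2 ((1 + D) / D) > 0"
  by (simp add: field_simps)

theorem mainTheorem11:
  fixes R rho l1 l2 :: real and Dstar :: "real \<Rightarrow> real"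
  assumes "R > 0" and "rho > 0" and "l1 > 0" and "l2 > 0"
    and "Dstar \<in> borel_measurable borel"
    and "\<And>h. h > 0 \<Longrightarrow> Dstar h > 0"
    and "\<And>h D. h > 0 \<Longrightarrow> D > 0 \<Longrightarrow> cond_outage l1 l2 R h (Dstar h) \<le> cond_outage l1 l2 R h D"
  shows "P_HYB rho l1 l2 R Dstar < P_QMF rho l1 l2 R Dstar
       \<and> P_HYB rho l1 l2 R Dstar < P_DF rho l1 l2 R"
proof -
  note R = assms(1) and rho = assms(2) and l1 = assms(3) and l2 = assms(4)
  note [measurable] = assms(5)
  let ?M1 = "exp_law rho"
  let ?Q = "exp_law l1 \<Otimes>\<^sub>M exp_law l2"
  let ?C = "chan_law rho l1 l2"
  interpret M1: prob_space ?M1 using prob_exp_law rho .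
  interpret Q: prob_space ?Q by (intro prob_space_pair prob_exp_law l1 l2)
  interpret C: prob_space ?C unfolding chan_law_def by (intro prob_space_pair prob_exp_law l1 l2 rho)
  have fmQ: "finite_measure ?Q" "finite_measure ?M1" by unfold_locales
  define S1 where "S1 = {(h::real, g1::real, g2::real). R < log 2 (1 + h) \<and> R > log 2 (1 + g1 + g2)}"
  define S2 where "S2 = {(h::real, g1::real, g2::real). R \<ge> log 2 (1 + h) \<and> R > R_QMF h g1 g2 (Dstar h)}"
  define T where "T = {(h::real, g1::real, g2::real). R > R_QMF h g1 g2 (Dstar h)}"
  define U where "U = {(h::real, g1::real, g2::real). R \<ge> log 2 (1 + h) \<and> R > log 2 (1 + g2)}"
  have sp: "space ?C = UNIV" unfolding chan_law_def by (simp add: space_pair_measure)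
  have S1m: "S1 \<in> sets ?C"
  proof -
    have "S1 = {x \<in> space ?C. R < log 2 (1 + fst x) \<and> R > log 2 (1 + fst (snd x) + snd (snd x))}"
      unfolding S1_def sp by auto
    also have "\<dots> \<in> sets ?C" unfolding chan_law_def by measurable
    finally show ?thesis .
  qed
  have S2m: "S2 \<in> sets ?C"
  proof -
    have "S2 = {x \<in> space ?C. R \<ge> log 2 (1 + fst x) \<and> R > R_QMF (fst x) (fst (snd x)) (snd (snd x)) (Dstar (fst x))}"
      unfolding S2_def sp by auto
    also have "\<dots> \<in> sets ?C" unfolding chan_law_def by measurable
    finally show ?thesis .
  qed
  have Tm: "T \<in> sets ?C"
  proof -
    have "T = {x \<in> space ?C. R > R_QMF (fst x) (fst (snd x)) (snd (snd x)) (Dstar (fst x))}"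
      unfolding T_def sp by auto
    also have "\<dots> \<in> sets ?C" unfolding chan_law_def by measurable
    finally show ?thesis .
  qed
  have Um: "U \<in> sets ?C"
  proof -
    have "U = {x \<in> space ?C. R \<ge> log 2 (1 + fst x) \<and> R > log 2 (1 + snd (snd x))}"
      unfolding U_def sp by auto
    also have "\<dots> \<in> sets ?C" unfolding chan_law_def by measurable
    finally show ?thesis .
  qed
  have HYB: "P_HYB rho l1 l2 R Dstar = measure ?C S1 + measure ?C S2"
    unfolding P_HYB_def S1_def S2_def ..
  have QMF: "P_QMF rho l1 l2 R Dstar = measure ?C T"
    unfolding P_QMF_def T_def ..
  have DF: "P_DF rho l1 l2 R = measure ?C S1 + measure ?C U"
    unfolding P_DF_def S1_def U_def ..
  define a where "a = 2 powr R - 1"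
  have a: "a > 0" unfolding a_def using R by simp
  have pa: "2 powr R = 1 + a" unfolding a_def by simp
  have Bsets: "\<And>n::nat. {h. a < h \<and> Dstar h < real n} \<in> sets ?M1"
  proof -
    fix n :: nat
    have "{h. a < h \<and> Dstar h < real n} = {h \<in> space ?M1. a < h \<and> Dstar h < real n}" by simp
    also have "\<dots> \<in> sets ?M1" by measurable
    finally show "{h. a < h \<and> Dstar h < real n} \<in> sets ?M1" .
  qed
  have "\<exists>n::nat. emeasure ?M1 {h. a < h \<and> Dstar h < real n} \<noteq> 0"
  proof (rule ccontr)
    assume "\<not> ?thesis"
    hence "\<And>n::nat. {h. a < h \<and> Dstar h < real n} \<in> null_sets ?M1" using Bsets by auto
    hence "(\<Union>n::nat. {h. a < h \<and> Dstar h < real n}) \<in> null_sets ?M1" by (rule null_sets_UN)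
    moreover have "(\<Union>n::nat. {h. a < h \<and> Dstar h < real n}) = {a<..}"
      using reals_Archimedean2 by auto
    moreover have "emeasure ?M1 {a<..} \<noteq> 0"
      using F_gt[OF rho, of a] a by (simp add: M1.emeasure_eq_measure)
    ultimately show False by auto
  qed
  then obtain n :: nat where Bn: "emeasure ?M1 {h. a < h \<and> Dstar h < real n} \<noteq> 0" by blast
  define B where "B = {h. a < h \<and> Dstar h < real n}"
  define N' where "N' = real n + 1"
  have N': "N' > 0" unfolding N'_def by simp
  define \<epsilon> where "\<epsilon> = 2 powr R / (4 * N')"
  have eps: "\<epsilon> > 0" unfolding \<epsilon>_def using N' by simp
  define BC where "BC = B \<times> ({0<..\<epsilon>} \<times> {a<..a+\<epsilon>})"
  have BCm: "BC \<in> sets ?C" unfolding BC_def B_def chan_law_def using Bsets[of n] by auto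
  have mBC: "measure ?C BC > 0"
  proof -
    have "measure ?C BC = measure ?M1 B * (measure (exp_law l1) {0<..\<epsilon>} * measure (exp_law l2) {a<..a+\<epsilon>})"
      unfolding BC_def chan_law_def using Bsets[of n] B_def
      by (simp add: measure_times'[OF fmQ] measure_times'[OF fin_exp[OF l2] fin_exp[OF l1]])
    also have "\<dots> > 0"
    proof -
      have "measure ?M1 B > 0" using Bn unfolding B_def
        by (simp add: M1.emeasure_eq_measure, metis measure_nonneg order_le_less)
      moreover have "measure (exp_law l1) {0<..\<epsilon>} > 0" using F_ioc[OF l1, of 0 \<epsilon>] eps l1 by simp
      moreover have "measure (exp_law l2) {a<..a+\<epsilon>} > 0"
      proof -
        have "- (a + \<epsilon>) * l2 = - a * l2 - \<epsilon> * l2" by (simp add: algebra_simps)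
        moreover have "\<epsilon> * l2 > 0" using eps l2 by simp
        ultimately have "- (a + \<epsilon>) * l2 < - a * l2" by linarith
        hence "exp (- (a + \<epsilon>) * l2) < exp (- a * l2)" by simp
        thus ?thesis using F_ioc[OF l2, of a "a+\<epsilon>"] eps a by simp
      qed
      ultimately show ?thesis by simp
    qed
    finally show ?thesis .
  qed
  define N0 where "N0 = ({..0::real} \<times> space ?Q)"
  have N0m: "N0 \<in> sets ?C" unfolding N0_def chan_law_def by (intro pair_measureI sets.top) auto
  have mN0: "measure ?C N0 = 0" unfolding N0_def chan_law_def
    using F_le[OF rho, of 0] measure_times'[OF fmQ, of "{..0}" "space ?Q", OF _ sets.top] by (simp del: space_exp_law)
  have inclA: "S1 \<union> S2 \<union> BC \<subseteq> T \<union> N0"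
  proof
    fix x assume x: "x \<in> S1 \<union> S2 \<union> BC"
    obtain h g1 g2 where xe: "x = (h, g1, g2)" by (cases x) auto
    show "x \<in> T \<union> N0"
    proof (cases "h > 0")
      case False thus ?thesis unfolding xe N0_def by (auto simp: space_pair_measure)
    next
      case hpos: True
      have D: "Dstar h > 0" using assms(6) hpos .
      consider "x \<in> S1" | "x \<in> S2" | "x \<in> BC" using x by auto
      thus ?thesis
      proof cases
        case 1
        hence "log 2 (1 + g1 + g2) < R" unfolding xe S1_def by auto
        hence "R_QMF h g1 g2 (Dstar h) < R" using log_ratio_pos[OF D] R by (intro qmf_lt) auto
        thus ?thesis unfolding xe T_def by auto
      next
        case 2 thus ?thesis unfolding xe S2_def T_def by auto
      next
        case 3
        hence g: "0 < g1" "g1 \<le> \<epsilon>" "a < g2" "g2 \<le> a + \<epsilon>" "Dstar h < real n"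
          unfolding xe BC_def B_def by auto
        have DN: "Dstar h < N'" using g(5) unfolding N'_def by simp
        have "1 + g1 + g2 \<le> 2 powr R + 2 * \<epsilon>" using g pa by simp
        also have "2 * \<epsilon> < 2 powr R / Dstar h"
        proof -
          have "2 * \<epsilon> = 2 powr R / (2 * N')" unfolding \<epsilon>_def by simp
          also have "\<dots> < 2 powr R / Dstar h" using DN D N' by (intro divide_strict_left_mono) auto
          finally show ?thesis .
        qed
        also have "2 powr R + 2 powr R / Dstar h = 2 powr R * ((1 + Dstar h) / Dstar h)"
          using D by (simp add: field_simps)
        finally have lt: "1 + g1 + g2 < 2 powr R * ((1 + Dstar h) / Dstar h)" by simp
        have "log 2 (1 + g1 + g2) < log 2 (2 powr R * ((1 + Dstar h) / Dstar h))"
          using lt g a D by (subst log_less_cancel_iff) auto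
        also have "\<dots> = R + log 2 ((1 + Dstar h) / Dstar h)" using D by (subst log_mult) auto
        finally have "R_QMF h g1 g2 (Dstar h) < R" using R by (intro qmf_lt) auto
        thus ?thesis unfolding xe T_def by auto
      qed
    qed
  qed
  have disjA: "(S1 \<union> S2) \<inter> BC = {}"
  proof -
    { fix h g1 g2 assume x: "(h, g1, g2) \<in> BC"
      hence g: "a < h" "0 < g1" "a < g2" unfolding BC_def B_def by auto
      have "R < log 2 (1 + h)" using g a pa by (subst less_log_iff) auto
      moreover have "R < log 2 (1 + g1 + g2)" using g a pa by (subst less_log_iff) auto
      ultimately have "(h, g1, g2) \<notin> S1 \<union> S2" unfolding S1_def S2_def by auto }
    thus ?thesis by auto
  qed
  have disj12: "S1 \<inter> S2 = {}" unfolding S1_def S2_def by auto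
  have "measure ?C S1 + measure ?C S2 + measure ?C BC = measure ?C (S1 \<union> S2 \<union> BC)"
    using S1m S2m BCm disj12 disjA by (simp add: C.finite_measure_Union)
  also have "\<dots> \<le> measure ?C (T \<union> N0)"
    using inclA Tm N0m by (intro C.finite_measure_mono) auto
  also have "\<dots> \<le> measure ?C T + measure ?C N0"
    using Tm N0m by (intro measure_subadditive) (auto simp: C.emeasure_finite)
  finally have A: "P_HYB rho l1 l2 R Dstar < P_QMF rho l1 l2 R Dstar"
    unfolding HYB QMF using mBC mN0 by linarith
  define q where "q = measure ?Q {(g1, g2). R > log 2 (1 + g2)}"
  have keyh: "\<And>h. h > 0 \<Longrightarrow> cond_outage l1 l2 R h (Dstar h) < q"
  proof -
    fix h :: real assume h: "h > 0"
    obtain D where D: "D > 0" "cond_outage l1 l2 R h D < q"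
      using key[OF l1 l2 R h] unfolding q_def by blast
    show "cond_outage l1 l2 R h (Dstar h) < q" using assms(7)[OF h D(1)] D(2) by simp
  qed
  have fub: "\<And>X. X \<in> sets ?C \<Longrightarrow> measure ?C X = (\<integral>h. measure ?Q (Pair h -` X) \<partial>?M1)
      \<and> integrable ?M1 (\<lambda>h. measure ?Q (Pair h -` X))"
    unfolding chan_law_def
    using fubini_measure[OF prob_exp_law[OF rho] prob_space_pair[OF prob_exp_law[OF l1] prob_exp_law[OF l2]]]
    by auto
  have sl2: "\<And>h. measure ?Q (Pair h -` S2) = (if R \<ge> log 2 (1 + h) then cond_outage l1 l2 R h (Dstar h) else 0)"
    unfolding cond_outage_def S2_def by auto
  have slU: "\<And>h. measure ?Q (Pair h -` U) = (if R \<ge> log 2 (1 + h) then q else 0)"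
    unfolding q_def U_def by auto
  have AEpos: "AE h in ?M1. h > 0"
  proof (rule AE_I'[of "{..0}"])
    show "{..0} \<in> null_sets ?M1" using F_le[OF rho, of 0] by (simp add: null_sets_def M1.emeasure_eq_measure)
  qed auto
  have "measure ?C S2 < measure ?C U"
    unfolding fub[OF S2m, THEN conjunct1] fub[OF Um, THEN conjunct1]
  proof (rule M1.integral_less_AE[where A="{0<..a}"])
    show "integrable ?M1 (\<lambda>h. measure ?Q (Pair h -` S2))" using fub[OF S2m] by simp
    show "integrable ?M1 (\<lambda>h. measure ?Q (Pair h -` U))" using fub[OF Um] by simp
    show "{0<..a} \<in> sets ?M1" by simp
    show "emeasure ?M1 {0<..a} \<noteq> 0"
    proof -
      have "- a * rho < 0" using a rho by simp
      hence "exp (- a * rho) < 1" by simp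
      thus ?thesis using F_ioc[OF rho, of 0 a] a rho by (simp add: M1.emeasure_eq_measure)
    qed
    show "AE x in ?M1. x \<in> {0<..a} \<longrightarrow> measure ?Q (Pair x -` S2) \<noteq> measure ?Q (Pair x -` U)"
    proof (rule AE_I2, safe)
      fix h assume h: "h \<in> {0<..a}" and eq: "measure ?Q (Pair h -` S2) = measure ?Q (Pair h -` U)"
      have "\<not> R < log 2 (1 + h)" using h pa by (subst less_log_iff) auto
      hence "R \<ge> log 2 (1 + h)" by simp
      thus False using eq keyh[of h] h unfolding sl2 slU by auto
    qed
    show "AE x in ?M1. measure ?Q (Pair x -` S2) \<le> measure ?Q (Pair x -` U)"
      using AEpos
    proof eventually_elim
      case (elim h) thus ?case using keyh[of h] unfolding sl2 slU by auto
    qed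
  qed
  hence B: "P_HYB rho l1 l2 R Dstar < P_DF rho l1 l2 R" unfolding HYB DF by simp
  show ?thesis using A B by simp

qed
end
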